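(* Let $\gamma\in(1,3]$ and $m\in\{1,2\}$. Let $P_*=(V_*,C_* )$ be either $P_8$ with $z\in(0,z_M]$, or $P_6$ with $z\in[z_m,z_M]$. Then the quadratic equation in $c$ $$-G_C(V_*,C_* )c^2+\big(F_C(V_*,C_* )-G_V(V_*,C_* )\big)c+F_V(V_*,C_* )=0$$ has two real roots of opposite signs (in particular, at $P_8$ the discriminant $R^2=(F_C-G_V)^2+4F_VG_C$ is strictly positive). Hence there is exactly one negative root, namely $c_1=\frac{F_C-G_V+R}{2G_C}<0$ with $R=\sqrt{(F_C-G_V)^2+4F_VG_C}$, all evaluated at $(V_*,C_* )$.
   Context: Fix $m\in\{1,2\}$ and $\gamma\in(1,3]$. For $z>0$ put $\lambda=1+m\gamma z$, $a_1=1+\frac{m(\gamma-1)}{2}$, $a_2=\frac{m(\gamma-1)+mz\gamma(\gamma-3)}{2}$, $a_3=\frac{mz\gamma(\gamma-1)}{2}$, $G(V,C;\gamma,z)=C^2[(m+1)V+2mz]-V(1+V)(\lambda+V)$, $F(V,C;\gamma,z)=C\{C^2[1+\frac{mz}{1+V}]-a_1(1+V)^2+a_2(1+V)-a_3\}$; $F_C,F_V,G_C,G_V$ denote partial derivatives in $C$ and $V$. $z_M=(\sqrt\gamma+\sqrt2)^{-2}$, $z_m=\frac{\gamma-1}{(2\gamma-1)(\gamma+1)}$; for $z\in(0,z_M]$, $w(z)=\sqrt{1-2(\gamma+2)z+(\gamma-2)^2z^2}$, $V_6=\frac{-1+(\gamma-2)z-w}{2}$, $C_6=1+V_6$, $V_8=\frac{-1+(\gamma-2)z+w}{2}$,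 $C_8=1+V_8$, $P_6=(V_6,C_6)$, $P_8=(V_8,C_8)$. *)

theory Defs
  imports "HOL-Analysis.Analysis"
begin

definition lam :: "real \<Rightarrow> real \<Rightarrow> real \<Rightarrow> real" where
  "lam m \<gamma> z = 1 + m * \<gamma> * z"
definition a1 :: "real \<Rightarrow> real \<Rightarrow> real" where
  "a1 m \<gamma> = 1 + m * (\<gamma> - 1) / 2"
definition a2 :: "real \<Rightarrow> real \<Rightarrow> real \<Rightarrow> real" where
  "a2 m \<gamma> z = (m * (\<gamma> - 1) + m * z * \<gamma> * (\<gamma> - 3)) / 2"
definition a3 :: "real \<Rightarrow> real \<Rightarrow> real \<Rightarrow> real" where
  "a3 m \<gamma> z = m * z * \<gamma> * (\<gamma> - 1) / 2"

definition GG :: "real \<Rightarrow> real \<Rightarrow> real \<Rightarrow> real \<Rightarrow> real \<Rightarrow> real" where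
  "GG m \<gamma> z V C = C^2 * ((m + 1) * V + 2 * m * z) - V * (1 + V) * (lam m \<gamma> z + V)"
definition FF :: "real \<Rightarrow> real \<Rightarrow> real \<Rightarrow> real \<Rightarrow> real \<Rightarrow> real" where
  "FF m \<gamma> z V C = C * (C^2 * (1 + m * z / (1 + V)) - a1 m \<gamma> * (1 + V)^2
      + a2 m \<gamma> z * (1 + V) - a3 m \<gamma> z)"

definition FC where "FC m \<gamma> z V C = deriv (\<lambda>c. FF m \<gamma> z V c) C"
definition FV where "FV m \<gamma> z V C = deriv (\<lambda>v. FF m \<gamma> z v C) V"
definition GC where "GC m \<gamma> z V C = deriv (\<lambda>c. GG m \<gamma> z V c) C"
definition GVd where "GVd m \<gamma> z V C = deriv (\<lambda>v. GG m \<gamma> z v C) V"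

definition zM :: "real \<Rightarrow> real" where "zM \<gamma> = 1 / (sqrt \<gamma> + sqrt 2)^2"
definition zm :: "real \<Rightarrow> real" where "zm \<gamma> = (\<gamma> - 1) / ((2 * \<gamma> - 1) * (\<gamma> + 1))"
definition ww :: "real \<Rightarrow> real \<Rightarrow> real" where
  "ww \<gamma> z = sqrt (1 - 2 * (\<gamma> + 2) * z + (\<gamma> - 2)^2 * z^2)"
definition V6 where "V6 \<gamma> z = (-1 + (\<gamma> - 2) * z - ww \<gamma> z) / 2"
definition C6 where "C6 \<gamma> z = 1 + V6 \<gamma> z"
definition V8 where "V8 \<gamma> z = (-1 + (\<gamma> - 2) * z + ww \<gamma> z) / 2"
definition C8 where "C8 \<gamma> z = 1 + V8 \<gamma> z"

end

theory Submission
  imports Defs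
begin


lemma polyid1:
  fixes g k d m :: real
  assumes "g = k + 1" "d = (2*g - 1)*(g + 1)" "m = 1"
  shows "((m * ((g - 1)*d - k * (3*g + 2 - g^2)) / 2)^2
     - (d + (g-2)*k) * (m * ((g - 1)*d - k * (3*g + 2 - g^2)) / 2) * (2 + m * (g - 1))
     + g * k * d * (2 + m * (g - 1))^2) = 12*k + 39*k^2 + 38*k^3 + 12*k^4 - k^6/4"
proof -
  have d: "d = (2*(k+1) - 1)*((k+1) + 1)" using assms by simp
  show ?thesis unfolding d assms(1) assms(3) by algebra
qed

lemma polyid2:
  fixes g k d m :: real
  assumes "g = k + 1" "d = (2*g - 1)*(g + 1)" "m = 2"
  shows "((m * ((g - 1)*d - k * (3*g + 2 - g^2)) / 2)^2
     - (d + (g-2)*k) * (m * ((g - 1)*d - k * (3*g + 2 - g^2)) / 2) * (2 + m * (g - 1))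
     + g * k * d * (2 + m * (g - 1))^2) = 16*k + 56*k^2 + 44*k^3 + 16*k^4 + 2*k^5 - k^6"
proof -
  have d: "d = (2*(k+1) - 1)*((k+1) + 1)" using assms by simp
  show ?thesis unfolding d assms(1) assms(3) by algebra
qed

lemma Qzm_pos:
  fixes m g :: real
  assumes hm: "m = 1 \<or> m = 2" and g: "1 < g" "g \<le> 3"
  shows "(m * ((g - 1) - zm g * (3*g + 2 - g^2)) / 2)^2
     - (1 + (g-2)*zm g) * (m * ((g - 1) - zm g * (3*g + 2 - g^2)) / 2) * (2 + m * (g - 1))
     + g * zm g * (2 + m * (g - 1))^2 > 0"
proof -
  define k where "k = g - 1"
  have k: "0 < k" "k \<le> 2" using g k_def by auto
  have gk: "g = k + 1" using k_def by simp
  define d where "d = (2*g - 1)*(g + 1)"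
  have d: "d > 0" unfolding d_def using g by (intro mult_pos_pos) auto
  define z where "z = zm g"
  have zd: "z * d = k" unfolding z_def zm_def k_def using d unfolding d_def by (simp add: field_simps)
  have k2: "k^2 \<le> 4" using k mult_mono[of k 2 k 2] by (simp add: power2_eq_square)
  have k6: "k^6 \<le> 4 * k^4"
  proof -
    have "k^4 * k^2 \<le> k^4 * 4" using k2 by (intro mult_left_mono) auto
    thus ?thesis by (simp add: power_add[symmetric] mult.commute)
  qed
  have kp: "k^2 \<ge> 0" "k^3 \<ge> 0" "k^4 \<ge> 0" "k^5 \<ge> 0" using k by auto
  define E where "E = (m * ((g - 1) - z * (3*g + 2 - g^2)) / 2)^2
     - (1 + (g-2)*z) * (m * ((g - 1) - z * (3*g + 2 - g^2)) / 2) * (2 + m * (g - 1))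
     + g * z * (2 + m * (g - 1))^2"
  have "E * d^2 = ((m * ((g - 1)*d - (z*d) * (3*g + 2 - g^2)) / 2)^2
     - (d + (g-2)*(z*d)) * (m * ((g - 1)*d - (z*d) * (3*g + 2 - g^2)) / 2) * (2 + m * (g - 1))
     + g * (z*d) * d * (2 + m * (g - 1))^2)"
    unfolding E_def by (simp add: algebra_simps power2_eq_square)
  also have "\<dots> = ((m * ((g - 1)*d - k * (3*g + 2 - g^2)) / 2)^2
     - (d + (g-2)*k) * (m * ((g - 1)*d - k * (3*g + 2 - g^2)) / 2) * (2 + m * (g - 1))
     + g * k * d * (2 + m * (g - 1))^2)" unfolding zd ..
  finally have Ed: "E * d^2 = \<dots>" .
  have "E * d^2 > 0"
  proof (cases "m = 1")
    case True
    show ?thesis unfolding Ed polyid1[OF gk d_def True] using k k6 kp by linarith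
  next
    case False
    hence "m = 2" using hm by auto
    thus ?thesis unfolding Ed polyid2[OF gk d_def \<open>m = 2\<close>] using k k6 kp by linarith
  qed
  moreover have "d^2 > 0" using d by simp
  ultimately have "E > 0" by (metis zero_less_mult_pos2)
  thus ?thesis unfolding E_def z_def .
qed



lemma Vprops:
  fixes m g z V :: real
  assumes m: "m = 1 \<or> m = 2" and g: "1 < g" "g \<le> 3" and z: "0 < z" "z < 1/4"
    and hVq: "V^2 + (1 - (g-2)*z)*V + 2*z = 0"
  shows "V < 0" "(m+1)*V + 2*m*z < 0"
proof -
  have gz1: "(g-1)*z > 0" using g z by simp
  have gz3: "(3-g)*z \<ge> 0" using g z by simp
  have "g*z \<le> 3*z" using gz3 by (simp add: algebra_simps)
  moreover have "(g-2)*z = g*z - 2*z" by (simp add: algebra_simps)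
  ultimately have b: "1 - (g-2)*z > 0" using z by linarith
  show V: "V < 0"
  proof (rule ccontr)
    assume "\<not> V < 0"
    hence "V \<ge> 0" by simp
    hence "(1 - (g-2)*z)*V \<ge> 0" "V^2 \<ge> 0" using b by auto
    thus False using hVq z by linarith
  qed
  have id: "(m+1)*V + 2*m*z = V * (m + 1 - m*(V + (1 - (g-2)*z)))"
  proof -
    have "2*z = 0 - V^2 - (1 - (g-2)*z)*V" using hVq by linarith
    hence "(m+1)*V + 2*m*z = (m+1)*V + m*(0 - V^2 - (1 - (g-2)*z)*V)" by (simp add: mult.assoc[symmetric] mult.commute)
    thus ?thesis by (simp add: algebra_simps power2_eq_square)
  qed
  have "(g-2)*z = (g-1)*z - z" by (simp add: algebra_simps)
  hence "V + (1 - (g-2)*z) < 5/4" using V gz1 z by linarith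
  hence "m + 1 - m*(V + (1 - (g-2)*z)) > 0" using m by auto
  thus "(m+1)*V + 2*m*z < 0" unfolding id using V by (simp add: mult_neg_pos)
qed

lemma Eid:
  fixes m g z C :: real
  shows "- m*z - 2 * a1 m g * C + a2 m g z
     = m * ((g - 1) - z * (3*g + 2 - g^2)) / 2 - (2 + m*(g-1)) * C"
  unfolding a1_def a2_def by (simp add: field_simps power2_eq_square)

lemma E8:
  fixes m g z w :: real
  assumes m: "m = 1 \<or> m = 2" and g: "1 < g" "g \<le> 3" and z: "0 < z"
    and w: "w \<ge> 0" and C: "2*C = 1 + (g-2)*z + w"
  shows "- m*z - 2 * a1 m g * C + a2 m g z < 0"
proof -
  define s where "s = 1 + (g-2)*z"
  define N where "N = m * ((g - 1) - z * (3*g + 2 - g^2)) / 2"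
  define D where "D = 2 + m*(g-1)"
  have D: "D > 0" unfolding D_def using m g by auto
  have X: "D * s - 2*N = 2 + z*(2*g - 4 + 4*m)" unfolding D_def s_def N_def
    by (simp add: field_simps power2_eq_square)
  have "z*(2*g - 4 + 4*m) > 0" using z g m by (intro mult_pos_pos) auto
  hence X0: "D * s - 2*N > 0" using X by linarith
  have "2*C \<ge> s" using C w unfolding s_def by linarith
  hence "D*(2*C) \<ge> D * s" using D by (intro mult_left_mono) auto
  hence "N - D*C < 0" using X0 by (simp add: algebra_simps)
  thus ?thesis unfolding Eid N_def D_def .
qed

lemma E6:
  fixes m g z w :: real
  assumes m: "m = 1 \<or> m = 2" and g: "1 < g" "g \<le> 3" and z: "zm g \<le> z"
    and w: "w \<ge> 0" and w2: "w^2 = 1 - 2*(g+2)*z + (g-2)^2*z^2"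
    and C: "2*C = 1 + (g-2)*z - w"
  shows "- m*z - 2 * a1 m g * C + a2 m g z < 0"
proof -
  define s where "s = 1 + (g-2)*z"
  define \<rho> where "\<rho> = 3*g + 2 - g^2"
  define D where "D = 2 + m*(g-1)"
  define Nf where "Nf = (\<lambda>x. m * ((g - 1) - x * \<rho>) / 2)"
  define Qf where "Qf = (\<lambda>x. (Nf x)^2 - (1 + (g-2)*x) * Nf x * D + g * x * D^2)"
  define A where "A = m*\<rho>/4*(m*\<rho> + 2*(g-2)*D)"
  define N where "N = Nf z"
  define zz where "zz = zm g"
  have zz: "zz > 0" unfolding zz_def zm_def using g by (intro divide_pos_pos mult_pos_pos) auto
  have z0: "z > 0" using zz z zz_def by linarith
  have D: "D > 0" unfolding D_def using m g by auto
  have rho: "\<rho> > 0"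
  proof -
    have "g*(3-g) \<ge> 0" using g by simp
    thus ?thesis unfolding \<rho>_def by (simp add: algebra_simps power2_eq_square)
  qed
  have A: "A \<ge> 0"
  proof -
    have "m*\<rho> + 2*(g-2)*D > 0"
    proof (cases "m = 1")
      case True
      have "(g+2)*(g-1) > 0" using g by simp
      thus ?thesis unfolding True \<rho>_def D_def by (simp add: algebra_simps power2_eq_square)
    next
      case False
      hence m2: "m = 2" using m by simp
      have "g*(g-1) > 0" using g by simp
      thus ?thesis unfolding m2 \<rho>_def D_def by (simp add: algebra_simps power2_eq_square)
    qed
    moreover have "m*\<rho>/4 > 0" using m rho by auto
    ultimately show ?thesis unfolding A_def by simp
  qed
  have Q0: "Qf 0 < 0"
  proof -
    have eq: "Qf 0 = (m*(g-1)/2) * (m*(g-1)/2 - D)" unfolding Qf_def Nf_def by (simp add: algebra_simps power2_eq_square)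
    have p: "m*(g-1)/2 > 0" using m g by auto
    have n: "m*(g-1)/2 - D < 0" unfolding D_def using m g by (auto simp: field_simps)
    show ?thesis unfolding eq using p n by (rule mult_pos_neg)
  qed
  have Qzz: "Qf zz > 0" using Qzm_pos[OF m g] unfolding Qf_def Nf_def zz_def \<rho>_def D_def .
  have chord: "zz * Qf z = z * Qf zz - (z - zz) * Qf 0 + A * zz * z * (z - zz)"
    unfolding Qf_def Nf_def A_def by (simp add: field_simps power2_eq_square)
  have "z * Qf zz > 0" using z0 Qzz by simp
  moreover have "(z - zz) * Qf 0 \<le> 0" using z Q0 zz_def by (simp add: mult_nonneg_nonpos)
  moreover have "A * zz * z * (z - zz) \<ge> 0" using A zz z0 z zz_def by simp
  ultimately have "zz * Qf z > 0" using chord by linarith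
  hence Qz: "Qf z > 0" using zz by (simp add: zero_less_mult_iff)
  have X: "D * s - 2*N = 2 + z*(2*g - 4 + 4*m)" unfolding D_def s_def N_def Nf_def \<rho>_def
    by (simp add: field_simps power2_eq_square)
  have "z*(2*g - 4 + 4*m) > 0" using z0 g m by (intro mult_pos_pos) auto
  hence X0: "D * s - 2*N > 0" using X by linarith
  have w2': "w^2 = s^2 - 4*g*z" unfolding w2 s_def by (simp add: algebra_simps power2_eq_square)
  have "(D * s - 2*N)^2 - (D*w)^2 = 4 * Qf z"
    unfolding Qf_def N_def power_mult_distrib w2' s_def by (simp add: algebra_simps power2_eq_square)
  hence sq: "(D*w)^2 < (D * s - 2*N)^2" using Qz by linarith
  have "D*w < D * s - 2*N"
  proof (rule ccontr)
    assume "\<not> D*w < D * s - 2*N"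
    hence "D * s - 2*N \<le> D*w" by simp
    hence "(D * s - 2*N)^2 \<le> (D*w)^2" using X0 by (intro power_mono) auto
    thus False using sq by linarith
  qed
  moreover have "2*C = s - w" using C s_def by simp
  hence "D*(2*C) = D * s - D*w" by (simp add: right_diff_distrib)
  moreover have "D*(2*C) = 2*(D*C)" by simp
  ultimately have "N - D*C < 0" by linarith
  thus ?thesis unfolding Eid N_def Nf_def D_def \<rho>_def .
qed



lemma quad:
  fixes Gc Fv b :: real
  assumes hG: "Gc < 0" and hF: "Fv < 0"
  shows "Gc \<noteq> 0 \<and> b^2 + 4*Fv*Gc > 0
     \<and> (\<exists>r1 r2. r1 < 0 \<and> 0 < r2 \<and> {c. - Gc * c^2 + b * c + Fv = 0} = {r1, r2})
     \<and> (b + sqrt (b^2 + 4*Fv*Gc)) / (2*Gc) < 0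
     \<and> {c. - Gc * c^2 + b * c + Fv = 0 \<and> c < 0} = {(b + sqrt (b^2 + 4*Fv*Gc)) / (2*Gc)}"
proof -
  define R where "R = sqrt (b^2 + 4*Fv*Gc)"
  have FG: "Fv*Gc > 0" using hG hF by (simp add: mult_neg_neg)
  have disc: "b^2 + 4*Fv*Gc > 0"
  proof -
    have "b^2 \<ge> 0" by simp
    thus ?thesis using FG by linarith
  qed
  have R2: "R^2 = b^2 + 4*Fv*Gc" unfolding R_def by (rule real_sqrt_pow2[OF less_imp_le[OF disc]])
  have R0: "R \<ge> 0" unfolding R_def by (rule real_sqrt_ge_zero[OF less_imp_le[OF disc]])
  have Rb: "R > \<bar>b\<bar>"
  proof -
    have "\<bar>b\<bar>^2 < R^2" using R2 FG by simp
    thus ?thesis using R0 by (smt (verit) power_mono)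
  qed
  define r1 where "r1 = (b + R) / (2*Gc)"
  define r2 where "r2 = (b - R) / (2*Gc)"
  have r1: "r1 < 0" unfolding r1_def using Rb hG by (intro divide_pos_neg) auto
  have r2: "r2 > 0" unfolding r2_def using Rb hG by (intro divide_neg_neg) auto
  have fact: "- Gc * c^2 + b * c + Fv = - Gc * (c - r1) * (c - r2)" for c
  proof -
    have "- Gc * (c - r1) * (c - r2) = - Gc * c^2 + b*c - (b^2 - R^2)/(4*Gc)"
      unfolding r1_def r2_def using hG by (simp add: field_simps power2_eq_square)
    also have "\<dots> = - Gc * c^2 + b * c + Fv" using R2 hG by (simp add: field_simps)
    finally show ?thesis by simp
  qed
  have roots: "{c. - Gc * c^2 + b * c + Fv = 0} = {r1, r2}"
  proof -
    have "{c. - Gc * c^2 + b * c + Fv = 0} = {c. - Gc * (c - r1) * (c - r2) = 0}"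
      by (simp only: fact)
    also have "\<dots> = {r1, r2}" using hG by auto
    finally show ?thesis .
  qed
  have neg: "{c. - Gc * c^2 + b * c + Fv = 0 \<and> c < 0} = {r1}"
    using roots r1 r2 by auto
  show ?thesis using hG disc roots r1 r2 neg unfolding R_def[symmetric] r1_def[symmetric] by blast
qed

lemma dGC: "GC m g z V C = 2*C*((m+1)*V + 2*m*z)"
proof -
  have "((\<lambda>c. GG m g z V c) has_field_derivative (2*C*((m+1)*V + 2*m*z))) (at C)"
    unfolding GG_def by (auto intro!: derivative_eq_intros simp: power2_eq_square)
  thus ?thesis unfolding GC_def by (rule DERIV_imp_deriv)
qed

lemma dFV: assumes "1 + V \<noteq> 0"
  shows "FV m g z V C = C * (C^2 * (- m*z/(1+V)^2) - 2 * a1 m g * (1+V) + a2 m g z)"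
proof -
  have "((\<lambda>v. FF m g z v C) has_field_derivative (C * (C^2 * (- m*z/(1+V)^2) - 2 * a1 m g * (1+V) + a2 m g z))) (at V)"
    unfolding FF_def using assms
    apply (auto intro!: derivative_eq_intros)
    apply (simp add: field_simps power2_eq_square)
    done
  thus ?thesis unfolding FV_def by (rule DERIV_imp_deriv)
qed

lemma zMfacts:
  fixes g z :: real
  assumes g: "1 < g" and z: "0 < z" "z \<le> zM g"
  shows "z < 1/4" "0 \<le> 1 - 2*(g+2)*z + (g-2)^2*z^2"
proof -
  define s where "s = sqrt g"
  define t where "t = sqrt 2"
  have s: "s > 1" "s^2 = g" unfolding s_def using g by auto
  have t: "t > 1" "t^2 = 2" unfolding t_def by auto
  have st4: "(s+t)^2 > 4"
  proof -
    have "2 < s + t" using s t by linarith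
    hence "2^2 < (s+t)^2" by (intro power_strict_mono) auto
    thus ?thesis by simp
  qed
  have pos: "(s+t)^2 > 0" using st4 by linarith
  have zz: "z * (s+t)^2 \<le> 1" using z(2) pos unfolding zM_def s_def[symmetric] t_def[symmetric]
    by (simp add: le_divide_eq)
  have "z * 4 < z * (s+t)^2" using z st4 by simp
  thus "z < 1/4" using zz by linarith
  have "(s-t)^2 \<le> (s+t)^2"
  proof -
    have "(s+t)^2 - (s-t)^2 = 4*(s*t)" by (simp add: algebra_simps power2_eq_square)
    moreover have "s*t \<ge> 0" using s t by simp
    ultimately show ?thesis by linarith
  qed
  hence "z*(s-t)^2 \<le> z*(s+t)^2" using z by (intro mult_left_mono) auto
  hence f: "1 - z*(s+t)^2 \<ge> 0" "1 - z*(s-t)^2 \<ge> 0" using zz by (auto simp: mult.commute)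
  have "(1 - z*(s+t)^2)*(1 - z*(s-t)^2) = 1 - 2*(s^2+t^2)*z + (s^2-t^2)^2*z^2"
    by (simp add: algebra_simps power2_eq_square)
  hence "1 - 2*(g+2)*z + (g-2)^2*z^2 = (1 - z*(s+t)^2)*(1 - z*(s-t)^2)" using s t by simp
  thus "0 \<le> 1 - 2*(g+2)*z + (g-2)^2*z^2" using f by simp
qed

lemma hVq_lemma:
  fixes g z w V :: real
  assumes w2: "w^2 = 1 - 2*(g+2)*z + (g-2)^2*z^2"
    and V: "w = 2*V + 1 - (g-2)*z \<or> w = - (2*V + 1 - (g-2)*z)"
  shows "V^2 + (1 - (g-2)*z)*V + 2*z = 0"
proof -
  have sq: "w^2 = (2*V + 1 - (g-2)*z)^2"
    using V
  proof
    assume "w = - (2*V + 1 - (g-2)*z)"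
    thus ?thesis by (simp only: power2_minus)
  qed simp
  have "4*(V^2 + (1 - (g-2)*z)*V + 2*z) = (2*V + 1 - (g-2)*z)^2 - (1 - 2*(g+2)*z + (g-2)^2*z^2)"
    by (simp add: algebra_simps power2_eq_square)
  also have "\<dots> = 0" using sq w2 by simp
  finally show ?thesis by simp
qed

theorem mainTheorem3:
  fixes m \<gamma> z Vs Cs :: real
  assumes hm: "m = 1 \<or> m = 2"
    and h\<gamma>: "1 < \<gamma>" "\<gamma> \<le> 3"
    and hP: "(0 < z \<and> z \<le> zM \<gamma> \<and> Vs = V8 \<gamma> z \<and> Cs = C8 \<gamma> z)
           \<or> (zm \<gamma> \<le> z \<and> z \<le> zM \<gamma> \<and> Vs = V6 \<gamma> z \<and> Cs = C6 \<gamma> z)"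
  shows "let Fc = FC m \<gamma> z Vs Cs; Fv = FV m \<gamma> z Vs Cs;
             Gc = GC m \<gamma> z Vs Cs; Gv = GVd m \<gamma> z Vs Cs;
             q = (\<lambda>c. - Gc * c^2 + (Fc - Gv) * c + Fv);
             R = sqrt ((Fc - Gv)^2 + 4 * Fv * Gc);
             c1 = (Fc - Gv + R) / (2 * Gc)
         in Gc \<noteq> 0
            \<and> (Fc - Gv)^2 + 4 * Fv * Gc > 0
            \<and> (\<exists>r1 r2. r1 < 0 \<and> 0 < r2 \<and> {c. q c = 0} = {r1, r2})
            \<and> c1 < 0 \<and> {c. q c = 0 \<and> c < 0} = {c1}"
proof -
  define w where "w = ww \<gamma> z"
  have z0: "0 < z"
  proof (cases "0 < z")
    case False
    hence "zm \<gamma> \<le> z" using hP by auto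
    moreover have "zm \<gamma> > 0" unfolding zm_def using h\<gamma> by (intro divide_pos_pos mult_pos_pos) auto
    ultimately show ?thesis by linarith
  qed simp
  have zMle: "z \<le> zM \<gamma>" using hP by auto
  note zf = zMfacts[OF h\<gamma>(1) z0 zMle]
  have w0: "w \<ge> 0" unfolding w_def ww_def by (rule real_sqrt_ge_zero[OF zf(2)])
  have w2: "w^2 = 1 - 2*(\<gamma>+2)*z + (\<gamma>-2)^2*z^2" unfolding w_def ww_def by (rule real_sqrt_pow2[OF zf(2)])
  have CV: "Cs = 1 + Vs" and key: "Cs > 0 \<and> - m*z - 2 * a1 m \<gamma> * Cs + a2 m \<gamma> z < 0"
    and hVq: "Vs^2 + (1 - (\<gamma>-2)*z)*Vs + 2*z = 0"
  proof -
    have "(Cs = 1 + Vs \<and> Cs > 0 \<and> - m*z - 2 * a1 m \<gamma> * Cs + a2 m \<gamma> z < 0)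
          \<and> Vs^2 + (1 - (\<gamma>-2)*z)*Vs + 2*z = 0"
      using hP
    proof
      assume h: "0 < z \<and> z \<le> zM \<gamma> \<and> Vs = V8 \<gamma> z \<and> Cs = C8 \<gamma> z"
      have V: "2*Vs = -1 + (\<gamma>-2)*z + w" using h unfolding V8_def w_def by simp
      have C: "2*Cs = 1 + (\<gamma>-2)*z + w" using h V unfolding C8_def by simp
      have "(\<gamma>-2)*z = (\<gamma>-1)*z - z" by (simp add: algebra_simps)
      moreover have "(\<gamma>-1)*z > 0" using h\<gamma> z0 by simp
      ultimately have "Cs > 0" using C w0 zf(1) by linarith
      moreover have "- m*z - 2 * a1 m \<gamma> * Cs + a2 m \<gamma> z < 0" using E8[OF hm h\<gamma> z0 w0 C] .
      moreover have "Cs = 1 + Vs" using h unfolding C8_def by simp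
      moreover have "Vs^2 + (1 - (\<gamma>-2)*z)*Vs + 2*z = 0"
        using hVq_lemma[OF w2] V by simp
      ultimately show ?thesis by simp
    next
      assume h: "zm \<gamma> \<le> z \<and> z \<le> zM \<gamma> \<and> Vs = V6 \<gamma> z \<and> Cs = C6 \<gamma> z"
      have V: "2*Vs = -1 + (\<gamma>-2)*z - w" using h unfolding V6_def w_def by simp
      have C: "2*Cs = 1 + (\<gamma>-2)*z - w" using h V unfolding C6_def by simp
      have "(\<gamma>-2)*z = (\<gamma>-1)*z - z" by (simp add: algebra_simps)
      moreover have "(\<gamma>-1)*z > 0" using h\<gamma> z0 by simp
      ultimately have s0: "1 + (\<gamma>-2)*z > 0" using zf(1) by linarith
      have "(1 + (\<gamma>-2)*z)^2 - w^2 = 4*\<gamma>*z" unfolding w2 by (simp add: algebra_simps power2_eq_square)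
      moreover have "\<gamma>*z > 0" using h\<gamma> z0 by simp
      ultimately have "w^2 < (1 + (\<gamma>-2)*z)^2" by linarith
      hence "w < 1 + (\<gamma>-2)*z" using s0 w0 by (smt (verit) power_mono)
      hence "Cs > 0" using C by linarith
      moreover have "- m*z - 2 * a1 m \<gamma> * Cs + a2 m \<gamma> z < 0" using E6[OF hm h\<gamma> _ w0 w2 C] h by simp
      moreover have "Cs = 1 + Vs" using h unfolding C6_def by simp
      moreover have "Vs^2 + (1 - (\<gamma>-2)*z)*Vs + 2*z = 0"
        using hVq_lemma[OF w2] V by simp
      ultimately show ?thesis by simp
    qed
    thus "Cs = 1 + Vs" "Cs > 0 \<and> - m*z - 2 * a1 m \<gamma> * Cs + a2 m \<gamma> z < 0"
      "Vs^2 + (1 - (\<gamma>-2)*z)*Vs + 2*z = 0" by auto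
  qed
  have Cpos: "Cs > 0" using key by simp
  have Gneg: "GC m \<gamma> z Vs Cs < 0"
  proof -
    have "(m+1)*Vs + 2*m*z < 0" using Vprops(2)[OF hm h\<gamma> z0 zf(1) hVq] .
    thus ?thesis unfolding dGC using Cpos by (simp add: mult_pos_neg)
  qed
  have Fneg: "FV m \<gamma> z Vs Cs < 0"
  proof -
    have ne: "1 + Vs \<noteq> 0" using Cpos CV by simp
    have "FV m \<gamma> z Vs Cs = Cs * (- m*z - 2 * a1 m \<gamma> * Cs + a2 m \<gamma> z)"
      unfolding dFV[OF ne] using Cpos unfolding CV[symmetric] by (simp add: power2_eq_square)
    thus ?thesis using key Cpos by (simp add: mult_pos_neg)
  qed
  show ?thesis unfolding Let_def using quad[OF Gneg Fneg, of "FC m \<gamma> z Vs Cs - GVd m \<gamma> z Vs Cs"] by simp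
qed

end
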